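(* Let $I$ be a non-empty finite set of positive integers, let $\lambda=\lambda^I$, let $s=\lambda_1-1$, and let $(C_0,C_1,\ldots,C_s)$ be the Naruse-Newton coefficients of $I$. If for some positive integer $i\le s$ it holds that $\lambda'_{i+1}=\lambda'_{s+1}=2$, then $$\frac{C_0}{0!}=\frac{C_1}{1!}=\cdots=\frac{C_{s-i+1}}{(s-i+1)!}.$$
   Context: Partitions are drawn as Young diagrams $\mathbb{D}(\lambda)$ in English notation; $c_{i,j}$ is the cell in row $i$ and column $j$; $\lambda'$ is the conjugate partition ($\lambda'_j$ is the number of cells in column $j$). The hook length $h_\lambda(c)$ of a cell $c$ is the number of cells of $\mathbb{D}(\lambda)$ weakly to the right of $c$ in its row or weakly below $c$ in its column (counting $c$ once). For partitions $\mu\subseteq\lambda$, an excited diagram of $\lambda/\mu$ is any subset of $\mathbb{D}(\lambda)$ obtained from $\mathbb{D}(\mu)$ by repeatedly applying the move: replace a cell $c_{i,j}\in D$ by $c_{i+1,j+1}$, allowed iff $c_{i+1,j+1}\in\mathbb{D}(\lambda)$ and none of $c_{i,j+1},c_{i+1,j},c_{i+1,j+1}$ lies in $D$; $\mathbb{E}(\lambda/\mu)$ denotes the set of excited diagrams. Ribbons and descent sets: a ribbon with $n$ cells is read from its lower-left cell to its upper-right cell, each successive cell being directly to the right of or directly above the previous one; it corresponds to the set of $i\in\{1,\ldots,n-1\}$ such that cell $i$ is directly below cell $i+1$ (this is the common descent set of all permutations read off from its standard fillings). For a non-empty finite set $I$ of positive integers, $\lambda^I$ is the unique partition with $\lambda^I_1=\lambda^I_2$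 such that the set of cells $c_{i,j}\in\mathbb{D}(\lambda^I)$ having fewer than three of $c_{i,j+1},c_{i+1,j},c_{i+1,j+1}$ in $\mathbb{D}(\lambda^I)$ is a ribbon (of $\max I+1$ cells) corresponding to $I$; this ribbon equals $\mathbb{D}(\lambda^I)\setminus\mathbb{D}(\mu^I)$ for a partition $\mu^I$. Put $s=s(I)=\lambda^I_1-1$. Naruse-Newton coefficients: every excited diagram $D$ of $\lambda^I/\mu^I$ meets the first row in a set $\{c_{1,1},\ldots,c_{1,r}\}$ with $0\le r\le s$. For $0\le j\le s$, $$C_j=C_j(I)=\sum_{D}\ \prod_{c\in D,\ c\text{ not in row }1} h_{\lambda^I}(c),$$ the sum over all $D\in\mathbb{E}(\lambda^I/\mu^I)$ having exactly $s-j$ cells in the first row. (These are the coefficients of the excitation factor of the ribbon in the Naruse-Newton basis.) Example: $I=\{1,3,5\}$ gives $\lambda^I=(3,3,2,1)$, $s=2$, $(C_0,C_1,C_2)=(6,6,3)$. *)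

theory Defs
  imports Complex_Main
begin

text \<open>Partitions are lists of positive integers, weakly decreasing.
  Cells are pairs (row, column), both 1-indexed (English notation).\<close>

definition is_partition :: "nat list \<Rightarrow> bool" where
  "is_partition lam \<longleftrightarrow> sorted_wrt (\<ge>) lam \<and> 0 \<notin> set lam"

definition diagram :: "nat list \<Rightarrow> (nat \<times> nat) set" where
  "diagram lam = {(i, j). 1 \<le> i \<and> i \<le> length lam \<and> 1 \<le> j \<and> j \<le> lam ! (i - 1)}"

definition conj_part :: "nat list \<Rightarrow> nat \<Rightarrow> nat" where
  "conj_part lam j = card {i. (i, j) \<in> diagram lam}"

definition hook :: "nat list \<Rightarrow> nat \<times> nat \<Rightarrow> nat" where
  "hook lam c = card {(a, b) \<in> diagram lam.
       (a = fst c \<and> b \<ge> snd c) \<or> (b = snd c \<and> a \<ge> fst c)}"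

definition excite_step :: "nat list \<Rightarrow> (nat \<times> nat) set \<Rightarrow> (nat \<times> nat) set \<Rightarrow> bool" where
  "excite_step lam D D' \<longleftrightarrow>
     (\<exists>i j. (i, j) \<in> D \<and> (i + 1, j + 1) \<in> diagram lam \<and>
            (i, j + 1) \<notin> D \<and> (i + 1, j) \<notin> D \<and> (i + 1, j + 1) \<notin> D \<and>
            D' = insert (i + 1, j + 1) (D - {(i, j)}))"

definition excited :: "nat list \<Rightarrow> nat list \<Rightarrow> (nat \<times> nat) set set" where
  "excited lam mu = {D. (excite_step lam)\<^sup>*\<^sup>* (diagram mu) D}"

definition border_cells :: "nat list \<Rightarrow> (nat \<times> nat) set" where
  "border_cells lam = {(i, j) \<in> diagram lam.
       card ({(i, j + 1), (i + 1, j), (i + 1, j + 1)} \<inter> diagram lam) < 3}"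

text \<open>R is a ribbon with n cells corresponding to the set I: its cells, read from
  the lower-left to the upper-right, are c 1, ..., c n, each successive cell directly
  to the right of or directly above the previous one, and k is in I iff cell k is
  directly below cell k+1.\<close>
definition ribbon_of :: "nat set \<Rightarrow> nat \<Rightarrow> (nat \<times> nat) set \<Rightarrow> bool" where
  "ribbon_of I n R \<longleftrightarrow>
     (\<exists>c :: nat \<Rightarrow> nat \<times> nat. bij_betw c {1..n} R \<and>
        (\<forall>k \<in> {1..<n}.
           (k \<in> I \<longrightarrow> fst (c k) \<ge> 1 \<and> c (k + 1) = (fst (c k) - 1, snd (c k))) \<and>
           (k \<notin> I \<longrightarrow> c (k + 1) = (fst (c k), snd (c k) + 1))))"

definition is_lambda_I :: "nat set \<Rightarrow> nat list \<Rightarrow> bool" where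
  "is_lambda_I I lam \<longleftrightarrow> is_partition lam \<and> length lam \<ge> 2 \<and> lam ! 0 = lam ! 1 \<and>
      ribbon_of I (Max I + 1) (border_cells lam)"

definition NN_coeff :: "nat list \<Rightarrow> nat list \<Rightarrow> nat \<Rightarrow> nat" where
  "NN_coeff lam mu j =
     (\<Sum>D \<in> {D \<in> excited lam mu. card {c \<in> D. fst c = 1} = (lam ! 0 - 1) - j}.
        \<Prod>c \<in> {c \<in> D. fst c \<noteq> 1}. hook lam c)"

end

theory Submission
  imports Defs
begin

lemma diag_iff: "(a, b) \<in> diagram l \<longleftrightarrow> 1 \<le> a \<and> a \<le> length l \<and> 1 \<le> b \<and> b \<le> l ! (a - 1)"
  by (simp add: diagram_def)

lemma diag_fin: "finite (diagram l)"
proof -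
  have "diagram l \<subseteq> {1..length l} \<times> {1..Max (set l)}"
  proof
    fix x assume "x \<in> diagram l"
    then obtain a b where x: "x = (a,b)" "1 \<le> a" "a \<le> length l" "1 \<le> b" "b \<le> l ! (a - 1)"
      by (cases x) (auto simp: diag_iff)
    then have "l ! (a - 1) \<in> set l" by auto
    then have "l ! (a - 1) \<le> Max (set l)" by simp
    with x have "b \<le> Max (set l)" by linarith
    with x show "x \<in> {1..length l} \<times> {1..Max (set l)}" by auto
  qed
  then show ?thesis using finite_subset by blast
qed

lemma part_mono: "is_partition l \<Longrightarrow> a \<le> a' \<Longrightarrow> a' < length l \<Longrightarrow> l ! a' \<le> l ! a"
  unfolding is_partition_def
  by (metis le_eq_less_or_eq order_refl sorted_wrt_nth_less)

lemma part_pos: "is_partition l \<Longrightarrow> a < length l \<Longrightarrow> 1 \<le> l ! a"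
  unfolding is_partition_def
  by (metis less_one not_le nth_mem)

lemma border_I:
  assumes "(a,b) \<in> diagram l" "y \<in> {(a, b + 1), (a + 1, b), (a + 1, b + 1)}" "y \<notin> diagram l"
  shows "(a,b) \<in> border_cells l"
proof -
  let ?S = "{(a, b + 1), (a + 1, b), (a + 1, b + 1)}"
  have "?S \<inter> diagram l \<subset> ?S" using assms by blast
  then have "card (?S \<inter> diagram l) < card ?S" by (intro psubset_card_mono) auto
  moreover have "card ?S \<le> 3" by (simp add: card_insert_if)
  ultimately show ?thesis using assms(1) unfolding border_cells_def by auto
qed

locale NNsetup =
  fixes lam mu :: "nat list" and s i :: nat
  assumes part: "is_partition lam" and len2: "2 \<le> length lam"
    and l0: "lam ! 0 = s + 1" and l1: "lam ! 1 = s + 1"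
    and i1: "1 \<le> i" and iS: "i \<le> s"
    and low: "\<And>a b. (a, b) \<in> diagram lam \<Longrightarrow> 3 \<le> a \<Longrightarrow> b \<le> i"
    and mup: "is_partition mu" and mud: "diagram lam - diagram mu = border_cells lam"
begin

lemma row1: "(1, b) \<in> diagram lam \<longleftrightarrow> 1 \<le> b \<and> b \<le> s + 1"
  using len2 l0 by (auto simp: diag_iff)

lemma row2: "(2, b) \<in> diagram lam \<longleftrightarrow> 1 \<le> b \<and> b \<le> s + 1"
  using len2 l1 by (auto simp: diag_iff)

lemma border_sub: "border_cells lam \<subseteq> diagram lam"
  unfolding border_cells_def by auto

lemma mu_sub: "diagram mu \<subseteq> diagram lam"
proof
  fix x assume xm: "x \<in> diagram mu"
  obtain a b where x: "x = (a, b)" by (cases x)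
  from xm x have a1: "1 \<le> a" and am: "a \<le> length mu" and b1: "1 \<le> b" and bm: "b \<le> mu ! (a - 1)"
    by (auto simp: diag_iff)
  show "x \<in> diagram lam"
  proof (rule ccontr)
    assume nx: "x \<notin> diagram lam"
    show False
    proof (cases "a \<le> length lam")
      case True
      define m where "m = lam ! (a - 1)"
      have m1: "1 \<le> m" unfolding m_def using part_pos[OF part] True a1 by auto
      have bm': "m < b" using nx x True a1 b1 by (auto simp: diag_iff m_def)
      have inmu: "(a, m) \<in> diagram mu" using a1 am m1 bm bm' by (auto simp: diag_iff)
      have inl: "(a, m) \<in> diagram lam" using a1 True m1 by (auto simp: diag_iff m_def)
      have "(a, m + 1) \<notin> diagram lam" by (auto simp: diag_iff m_def)
      then have "(a, m) \<in> border_cells lam" using border_I[OF inl] by blast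
      then show False using mud inmu by blast
    next
      case False
      define n where "n = length lam"
      have n2: "2 \<le> n" using len2 n_def by simp
      have "mu ! (a - 1) \<le> mu ! (n - 1)" using part_mono[OF mup, of "n - 1" "a - 1"] False am n_def n2 by auto
      then have inmu: "(n, 1) \<in> diagram mu" using False am n2 bm b1 n_def by (auto simp: diag_iff)
      have inl: "(n, 1) \<in> diagram lam" using n2 part_pos[OF part, of "n - 1"] n_def by (auto simp: diag_iff)
      have "(n + 1, 1) \<notin> diagram lam" by (auto simp: diag_iff n_def)
      then have "(n, 1) \<in> border_cells lam" using border_I[OF inl] by blast
      then show False using mud inmu by blast
    qed
  qed
qed

lemma mu_eq: "diagram mu = diagram lam - border_cells lam"
  using mu_sub mud by blast

definition T :: "nat \<Rightarrow> (nat \<times> nat) set" where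
  "T k = {(a, b). (a = 1 \<and> 1 \<le> b \<and> b \<le> s - k) \<or> (a = 2 \<and> s - k + 2 \<le> b \<and> b \<le> s + 1)}"

definition L :: "(nat \<times> nat) set" where
  "L = {x \<in> diagram mu. 2 \<le> fst x}"

definition goodE :: "(nat \<times> nat) set \<Rightarrow> bool" where
  "goodE E \<longleftrightarrow> E \<subseteq> diagram lam \<and> (\<forall>a b. (a, b) \<in> E \<longrightarrow> 2 \<le> a \<and> (a = 2 \<longrightarrow> b < i))"

definition Elow :: "(nat \<times> nat) set set" where
  "Elow = {E. (excite_step lam)\<^sup>*\<^sup>* L E}"

lemma mu_split: "diagram mu = T 0 \<union> L"
proof (intro equalityI subsetI)
  fix x assume xm: "x \<in> diagram mu"
  obtain a b where x: "x = (a, b)" by (cases x)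
  have xl: "x \<in> diagram lam" using xm mu_sub by blast
  show "x \<in> T 0 \<union> L"
  proof (cases "a = 1")
    case True
    have "b \<noteq> s + 1"
    proof
      assume "b = s + 1"
      moreover have "(1, s + 2) \<notin> diagram lam" using row1 by simp
      ultimately have "x \<in> border_cells lam" using border_I[of 1 b lam "(1, s+2)"] xl x True by auto
      then show False using mu_eq xm by blast
    qed
    then show ?thesis using xl x True row1 by (auto simp: T_def)
  next
    case False
    then show ?thesis using xm x by (auto simp: L_def diag_iff)
  qed
next
  fix x assume "x \<in> T 0 \<union> L"
  then show "x \<in> diagram mu"
  proof
    assume "x \<in> L" then show ?thesis by (simp add: L_def)
  next
    assume xt: "x \<in> T 0"
    then obtain b where x: "x = (1, b)" "1 \<le> b" "b \<le> s" by (auto simp: T_def)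
    have xl: "x \<in> diagram lam" using x row1 by simp
    have m: "(1, b + 1) \<in> diagram lam" "(2, b) \<in> diagram lam" "(2, b + 1) \<in> diagram lam"
      using x(2,3) row1 row2 by auto
    then have S: "{(1, b + 1), (1 + 1, b), (1 + 1, b + 1)} \<inter> diagram lam = {(1, b + 1), (1 + 1, b), (1 + 1, b + 1)}"
      unfolding one_add_one by blast
    have "card {(1::nat, b + 1), (1 + 1::nat, b), (1 + 1::nat, b + 1)} = 3" by simp
    then have "x \<notin> border_cells lam" using S x unfolding border_cells_def by simp
    then show ?thesis using xl mu_eq by blast
  qed
qed

lemma goodL: "goodE L"
  unfolding goodE_def
proof (intro conjI allI impI)
  show "L \<subseteq> diagram lam" using mu_sub L_def by auto
next
  fix a b assume ab: "(a, b) \<in> L"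
  then show "2 \<le> a" by (simp add: L_def)
  assume a2: "a = 2"
  show "b < i"
  proof (rule ccontr)
    assume "\<not> b < i"
    then have "(3, b + 1) \<notin> diagram lam" using low[of 3 "b+1"] by auto
    moreover have "(a, b) \<in> diagram lam" using ab mu_sub L_def by auto
    ultimately have "(a, b) \<in> border_cells lam" using border_I[of a b lam "(3, b+1)"] a2 by auto
    then show False using ab mu_eq L_def by blast
  qed
qed

lemma good_step: "goodE E \<Longrightarrow> excite_step lam E E' \<Longrightarrow> goodE E'"
  unfolding goodE_def excite_step_def by fastforce

lemma Elow_good: "E \<in> Elow \<Longrightarrow> goodE E"
  unfolding Elow_def
proof simp
  assume "(excite_step lam)\<^sup>*\<^sup>* L E"
  then show "goodE E"
    by (induction rule: rtranclp_induct) (auto intro: goodL good_step)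
qed

lemma disjTE: "goodE E \<Longrightarrow> k \<le> s - i + 1 \<Longrightarrow> x \<in> E \<Longrightarrow> x \<notin> T k"
  unfolding goodE_def T_def using iS by fastforce

lemma T_Suc: "k < s \<Longrightarrow> T (Suc k) = insert (2, s - k + 1) (T k - {(1, s - k)})"
  unfolding T_def by auto

lemma row1_T: "goodE E \<Longrightarrow> {c \<in> T k \<union> E. fst c = 1} = (\<lambda>c. (1, c)) ` {1..s - k}"
  unfolding goodE_def T_def by fastforce

lemma card_row1_T: "goodE E \<Longrightarrow> card {c \<in> T k \<union> E. fst c = 1} = s - k"
proof -
  assume g: "goodE E"
  have "card ((\<lambda>c. (1::nat, c)) ` {1..s - k}) = s - k"
    by (subst card_image) (auto simp: inj_on_def)
  then show ?thesis using row1_T[OF g] by simp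
qed

definition Inv :: "(nat \<times> nat) set \<Rightarrow> bool" where
  "Inv D \<longleftrightarrow> D \<subseteq> diagram lam \<and>
     ((\<exists>k E. k \<le> s - i + 1 \<and> E \<in> Elow \<and> D = T k \<union> E) \<or> card {c \<in> D. fst c = 1} < i - 1)"

lemma Inv_mu: "Inv (diagram mu)"
  unfolding Inv_def using mu_sub mu_split by (auto simp: Elow_def)

lemma step_Inv:
  assumes inv: "Inv D" and st: "excite_step lam D D'"
  shows "Inv D'"
proof -
  obtain a b where ab: "(a, b) \<in> D" "(a + 1, b + 1) \<in> diagram lam"
      "(a, b + 1) \<notin> D" "(a + 1, b) \<notin> D" "(a + 1, b + 1) \<notin> D"
      and D': "D' = insert (a + 1, b + 1) (D - {(a, b)})"
    using st unfolding excite_step_def by blast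
  have Dsub: "D \<subseteq> diagram lam" using inv Inv_def by blast
  have sub: "D' \<subseteq> diagram lam" using Dsub ab(2) D' by blast
  have a1: "1 \<le> a" using Dsub ab(1) by (auto simp: diag_iff)
  have finD: "finite D" using Dsub diag_fin finite_subset by blast
  have mono: "card {c \<in> D'. fst c = 1} \<le> card {c \<in> D. fst c = 1}"
    by (rule card_mono) (use finD D' a1 in auto)
  from inv consider (A) k E where "k \<le> s - i + 1" "E \<in> Elow" "D = T k \<union> E"
    | (B) "card {c \<in> D. fst c = 1} < i - 1"
    unfolding Inv_def by blast
  then show ?thesis
  proof cases
    case B
    then show ?thesis using mono sub unfolding Inv_def by auto
  next
    case A
    have g: "goodE E" using A Elow_good by blast
    have "(a, b) \<in> E \<or> (a, b) \<in> T k" using A ab by blast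
    then show ?thesis
    proof
      assume abE: "(a, b) \<in> E"
      define E2 where "E2 = insert (a + 1, b + 1) (E - {(a, b)})"
      have "excite_step lam E E2"
        unfolding excite_step_def E2_def using abE ab A by blast
      then have E2: "E2 \<in> Elow" using A(2) unfolding Elow_def by auto
      have "(a, b) \<notin> T k" using disjTE[OF g A(1) abE] .
      then have "D' = T k \<union> E2" using D' A(3) E2_def by blast
      then show ?thesis using E2 A(1) sub unfolding Inv_def by blast
    next
      assume abT: "(a, b) \<in> T k"
      then consider (r1) "a = 1" "1 \<le> b" "b \<le> s - k" | (r2) "a = 2" "s - k + 2 \<le> b"
        unfolding T_def by auto
      then show ?thesis
      proof cases
        case r2
        have "s - k + 2 \<ge> i + 1" using A(1) iS by arith
        moreover have "b + 1 \<le> i" using low[OF ab(2)] r2 by simp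
        ultimately show ?thesis using r2 by arith
      next
        case r1
        have bs: "b = s - k"
        proof (rule ccontr)
          assume "b \<noteq> s - k"
          then have "(a, b + 1) \<in> T k" using r1 unfolding T_def by auto
          then show False using ab(3) A(3) by blast
        qed
        have ks: "k < s" using r1 bs by arith
        have notE: "(1, s - k) \<notin> E" using g unfolding goodE_def by fastforce
        show ?thesis
        proof (cases "k + 1 \<le> s - i + 1")
          case True
          have "D' = insert (2, s - k + 1) ((T k \<union> E) - {(1, s - k)})"
            using D' A(3) r1(1) bs by (simp add: numeral_2_eq_2)
          also have "\<dots> = insert (2, s - k + 1) (T k - {(1, s - k)}) \<union> E" using notE by blast
          also have "\<dots> = T (Suc k) \<union> E" using T_Suc[OF ks] by simp
          finally have "D' = T (Suc k) \<union> E" .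
          then show ?thesis using True A(2) sub unfolding Inv_def by (metis Suc_eq_plus1)
        next
          case False
          have ksi: "s - k = i - 1" using False A(1) iS by arith
          have "{c \<in> D'. fst c = 1} \<subseteq> (\<lambda>c. (1, c)) ` {1..s - k - 1}"
          proof
            fix c assume c: "c \<in> {c \<in> D'. fst c = 1}"
            then have "c \<in> D - {(1, s - k)}" using D' r1 bs by auto
            then have "c \<in> {c \<in> T k \<union> E. fst c = 1} - {(1, s - k)}" using c A(3) by auto
            then have "c \<in> (\<lambda>c. (1, c)) ` {1..s - k}" "c \<noteq> (1, s - k)" using row1_T[OF g, of k] by auto
            then obtain d where d: "c = (1, d)" "1 \<le> d" "d \<le> s - k" by auto
            have "d \<noteq> s - k" using d(1) \<open>c \<noteq> (1, s - k)\<close> by simp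
            with d have "c = (1, d)" "d \<in> {1..s - k - 1}" by auto
            then show "c \<in> (\<lambda>c. (1, c)) ` {1..s - k - 1}" by blast
          qed
          then have "card {c \<in> D'. fst c = 1} \<le> card ((\<lambda>c. (1::nat, c)) ` {1..s - k - 1})"
            by (intro card_mono) auto
          also have "\<dots> \<le> s - k - 1" using card_image_le[of "{1..s - k - 1}" "\<lambda>c. (1::nat, c)"] by simp
          finally have "card {c \<in> D'. fst c = 1} < i - 1" using ksi ks by arith
          then show ?thesis using sub unfolding Inv_def by blast
        qed
      qed
    qed
  qed
qed

lemma reach_Inv: "(excite_step lam)\<^sup>*\<^sup>* (diagram mu) D \<Longrightarrow> Inv D"
proof (induction rule: rtranclp_induct)
  case base
  then show ?case by (rule Inv_mu)
next
  case (step y z)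
  then show ?case using step_Inv by blast
qed

lemma T_step:
  assumes k: "k < s - i + 1" and g: "goodE E"
  shows "excite_step lam (T k \<union> E) (T (Suc k) \<union> E)"
proof -
  have ks: "k < s" and ski: "i \<le> s - k" using k iS i1 by arith+
  have m1: "(1, s - k) \<in> T k \<union> E" using ski i1 unfolding T_def by auto
  have m2': "(2, s - k + 1) \<in> diagram lam" using row2 ks by simp
  have m2: "(1 + 1, s - k + 1) \<in> diagram lam" unfolding one_add_one by (rule m2')
  have gE: "\<And>a b. (a, b) \<in> E \<Longrightarrow> 2 \<le> a \<and> (a = 2 \<longrightarrow> b < i)" using g unfolding goodE_def by blast
  have m3: "(1, s - k + 1) \<notin> T k \<union> E" using gE[of 1 "s - k + 1"] unfolding T_def by auto
  have m4': "(2, s - k) \<notin> T k \<union> E" using gE[of 2 "s - k"] ski unfolding T_def by auto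
  have m5': "(2, s - k + 1) \<notin> T k \<union> E" using gE[of 2 "s - k + 1"] ski unfolding T_def by auto
  have m4: "(1 + 1, s - k) \<notin> T k \<union> E" unfolding one_add_one by (rule m4')
  have m5: "(1 + 1, s - k + 1) \<notin> T k \<union> E" unfolding one_add_one by (rule m5')
  have notE: "(1, s - k) \<notin> E" using gE[of 1 "s - k"] by auto
  have eq: "T (Suc k) \<union> E = insert (1 + 1, s - k + 1) ((T k \<union> E) - {(1, s - k)})"
    using T_Suc[OF ks] notE by (auto simp: one_add_one)
  show ?thesis unfolding excite_step_def
    using m1 m2 m3 m4 m5 eq by blast
qed

lemma lift:
  assumes g: "goodE E" and st: "excite_step lam E E'" and k: "k \<le> s - i + 1"
  shows "excite_step lam (T k \<union> E) (T k \<union> E')"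
proof -
  obtain a b where ab: "(a, b) \<in> E" "(a + 1, b + 1) \<in> diagram lam"
      "(a, b + 1) \<notin> E" "(a + 1, b) \<notin> E" "(a + 1, b + 1) \<notin> E"
      and E': "E' = insert (a + 1, b + 1) (E - {(a, b)})"
    using st unfolding excite_step_def by blast
  have gE: "2 \<le> a" "a = 2 \<longrightarrow> b < i" using g ab(1) unfolding goodE_def by blast+
  have ski: "i + 1 \<le> s - k + 2" using k iS by arith
  have n1: "(a, b + 1) \<notin> T k" using gE ski unfolding T_def by auto
  have n2: "(a + 1, b) \<notin> T k" "(a + 1, b + 1) \<notin> T k" using gE unfolding T_def by auto
  have n3: "(a, b) \<notin> T k" using disjTE[OF g k ab(1)] .
  have eq: "T k \<union> E' = insert (a + 1, b + 1) ((T k \<union> E) - {(a, b)})" using E' n3 by blast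
  show ?thesis unfolding excite_step_def
    using ab n1 n2 eq by blast
qed

lemma reach_T: "k \<le> s - i + 1 \<Longrightarrow> (excite_step lam)\<^sup>*\<^sup>* (diagram mu) (T k \<union> L)"
proof (induction k)
  case 0
  then show ?case using mu_split by simp
next
  case (Suc k)
  then have "(excite_step lam)\<^sup>*\<^sup>* (diagram mu) (T k \<union> L)" by simp
  moreover have "excite_step lam (T k \<union> L) (T (Suc k) \<union> L)"
    using T_step[OF _ goodL] Suc.prems by simp
  ultimately show ?case by (rule rtranclp.rtrancl_into_rtrancl)
qed

lemma reach_E:
  assumes "(excite_step lam)\<^sup>*\<^sup>* L E" and k: "k \<le> s - i + 1"
  shows "(excite_step lam)\<^sup>*\<^sup>* (T k \<union> L) (T k \<union> E)"
  using assms(1)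
proof (induction rule: rtranclp_induct)
  case base
  then show ?case by simp
next
  case (step y z)
  have "goodE y" using Elow_good step.hyps(1) unfolding Elow_def by blast
  then have "excite_step lam (T k \<union> y) (T k \<union> z)" using lift step.hyps(2) k by blast
  then show ?case using step.IH by (rule rtranclp.rtrancl_into_rtrancl[rotated])
qed

lemma level_set:
  assumes j: "j \<le> s - i + 1"
  shows "{D \<in> excited lam mu. card {c \<in> D. fst c = 1} = s - j} = (\<lambda>E. T j \<union> E) ` Elow"
proof (intro equalityI subsetI)
  fix D assume D: "D \<in> {D \<in> excited lam mu. card {c \<in> D. fst c = 1} = s - j}"
  then have inv: "Inv D" using reach_Inv unfolding excited_def by blast
  have cD: "card {c \<in> D. fst c = 1} = s - j" using D by blast
  have "\<not> card {c \<in> D. fst c = 1} < i - 1" using cD j iS by arith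
  then obtain k E where kE: "k \<le> s - i + 1" "E \<in> Elow" "D = T k \<union> E"
    using inv unfolding Inv_def by blast
  have "card {c \<in> D. fst c = 1} = s - k" using card_row1_T[OF Elow_good[OF kE(2)]] kE(3) by simp
  then have "k = j" using cD kE(1) j iS i1 by arith
  then show "D \<in> (\<lambda>E. T j \<union> E) ` Elow" using kE by blast
next
  fix D assume "D \<in> (\<lambda>E. T j \<union> E) ` Elow"
  then obtain E where E: "E \<in> Elow" "D = T j \<union> E" by blast
  have "(excite_step lam)\<^sup>*\<^sup>* (diagram mu) (T j \<union> E)"
    using reach_T[OF j] reach_E[of E j] E(1) j unfolding Elow_def by auto
  moreover have "card {c \<in> D. fst c = 1} = s - j" using card_row1_T[OF Elow_good[OF E(1)]] E(2) by simp
  ultimately show "D \<in> {D \<in> excited lam mu. card {c \<in> D. fst c = 1} = s - j}"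
    using E(2) unfolding excited_def by blast
qed

lemma hook2:
  assumes c: "i + 1 \<le> c" "c \<le> s + 1"
  shows "hook lam (2, c) = s + 2 - c"
proof -
  have "{(a, b) \<in> diagram lam. (a = fst (2::nat, c) \<and> b \<ge> snd (2::nat, c)) \<or> (b = snd (2::nat, c) \<and> a \<ge> fst (2::nat, c))}
        = (\<lambda>b. (2, b)) ` {c..s + 1}"
  proof (intro equalityI subsetI)
    fix x assume x: "x \<in> {(a, b) \<in> diagram lam. (a = fst (2::nat, c) \<and> b \<ge> snd (2::nat, c)) \<or> (b = snd (2::nat, c) \<and> a \<ge> fst (2::nat, c))}"
    obtain a b where ab: "x = (a, b)" by (cases x)
    have inl: "(a, b) \<in> diagram lam" using x ab by simp
    have a2: "a = 2"
    proof (rule ccontr)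
      assume "a \<noteq> 2"
      then have "3 \<le> a" "b = c" using x ab by auto
      then show False using low[OF inl] c by simp
    qed
    have "c \<le> b" using x ab a2 by auto
    moreover have "b \<le> s + 1" using inl a2 row2 by simp
    ultimately show "x \<in> (\<lambda>b. (2, b)) ` {c..s + 1}" using ab a2 by auto
  next
    fix x assume "x \<in> (\<lambda>b. (2::nat, b)) ` {c..s + 1}"
    then obtain b where b: "x = (2, b)" "c \<le> b" "b \<le> s + 1" by auto
    then have "(2, b) \<in> diagram lam" using row2 c by simp
    then show "x \<in> {(a, b) \<in> diagram lam. (a = fst (2::nat, c) \<and> b \<ge> snd (2::nat, c)) \<or> (b = snd (2::nat, c) \<and> a \<ge> fst (2::nat, c))}"
      using b by auto
  qed
  then have "hook lam (2, c) = card ((\<lambda>b. (2::nat, b)) ` {c..s + 1})" unfolding hook_def by simp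
  also have "\<dots> = card {c..s + 1}" by (rule card_image) (auto simp: inj_on_def)
  finally show ?thesis by simp
qed

definition T2 :: "nat \<Rightarrow> (nat \<times> nat) set" where
  "T2 j = (\<lambda>b. (2, b)) ` {s - j + 2..s + 1}"

lemma prod_fact: "j \<le> s \<Longrightarrow> (\<Prod>b\<in>{s - j + 2..s + 1}. (s + 2 - b)) = fact j"
proof -
  assume j: "j \<le> s"
  have "(\<Prod>b\<in>{s - j + 2..s + 1}. (s + 2 - b)) = (\<Prod>m\<in>{1..j}. m)"
  proof (rule prod.reindex_bij_witness[of _ "\<lambda>m. s + 2 - m" "\<lambda>b. s + 2 - b"])
    fix a assume "a \<in> {s - j + 2..s + 1}"
    then show "s + 2 - a \<in> {1..j}" "s + 2 - (s + 2 - a) = a" "s + 2 - a = s + 2 - a" using j by auto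
  next
    fix b assume "b \<in> {1..j}"
    then show "s + 2 - (s + 2 - b) = b" "s + 2 - b \<in> {s - j + 2..s + 1}" using j by auto
  qed
  also have "\<dots> = fact j" by (simp add: fact_prod)
  finally show ?thesis .
qed

lemma prodT2: "j \<le> s - i + 1 \<Longrightarrow> (\<Prod>c\<in>T2 j. hook lam c) = fact j"
proof -
  assume j: "j \<le> s - i + 1"
  have "(\<Prod>c\<in>T2 j. hook lam c) = (\<Prod>b\<in>{s - j + 2..s + 1}. hook lam (2, b))"
    unfolding T2_def by (subst prod.reindex) (auto simp: inj_on_def)
  also have "\<dots> = (\<Prod>b\<in>{s - j + 2..s + 1}. (s + 2 - b))"
  proof (rule prod.cong)
    fix b assume "b \<in> {s - j + 2..s + 1}"
    then have "i + 1 \<le> b" "b \<le> s + 1" using j iS by auto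
    then show "hook lam (2, b) = s + 2 - b" by (rule hook2)
  qed simp
  also have "\<dots> = fact j" using j iS i1 by (intro prod_fact) arith
  finally show ?thesis .
qed

lemma T_not1: "j \<le> s - i + 1 \<Longrightarrow> goodE E \<Longrightarrow> {c \<in> T j \<union> E. fst c \<noteq> 1} = T2 j \<union> E"
  unfolding T_def T2_def goodE_def by fastforce

lemma T2_disj: "j \<le> s - i + 1 \<Longrightarrow> goodE E \<Longrightarrow> T2 j \<inter> E = {}"
  unfolding T2_def goodE_def using iS by fastforce

lemma Elow_fin: "finite Elow"
proof -
  have "Elow \<subseteq> Pow (diagram lam)" using Elow_good unfolding goodE_def by blast
  then show ?thesis using diag_fin finite_subset by blast
qed

lemma NN_eq:
  assumes j: "j \<le> s - i + 1"
  shows "NN_coeff lam mu j = fact j * (\<Sum>E\<in>Elow. \<Prod>c\<in>E. hook lam c)"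
proof -
  have inj: "inj_on (\<lambda>E. T j \<union> E) Elow"
  proof (rule inj_onI)
    fix E1 E2 assume E: "E1 \<in> Elow" "E2 \<in> Elow" "T j \<union> E1 = T j \<union> E2"
    have "E1 = (T j \<union> E1) - T j" using disjTE[OF Elow_good[OF E(1)] j] by blast
    also have "\<dots> = (T j \<union> E2) - T j" using E(3) by simp
    also have "\<dots> = E2" using disjTE[OF Elow_good[OF E(2)] j] by blast
    finally show "E1 = E2" .
  qed
  have "NN_coeff lam mu j = (\<Sum>D\<in>(\<lambda>E. T j \<union> E) ` Elow. \<Prod>c\<in>{c \<in> D. fst c \<noteq> 1}. hook lam c)"
    unfolding NN_coeff_def using level_set[OF j] l0 by simp
  also have "\<dots> = (\<Sum>E\<in>Elow. \<Prod>c\<in>{c \<in> T j \<union> E. fst c \<noteq> 1}. hook lam c)"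
    by (subst sum.reindex[OF inj]) simp
  also have "\<dots> = (\<Sum>E\<in>Elow. fact j * (\<Prod>c\<in>E. hook lam c))"
  proof (rule sum.cong)
    fix E assume E: "E \<in> Elow"
    have g: "goodE E" using Elow_good[OF E] .
    have fE: "finite E" using g diag_fin finite_subset unfolding goodE_def by blast
    have fT: "finite (T2 j)" unfolding T2_def by simp
    have "(\<Prod>c\<in>{c \<in> T j \<union> E. fst c \<noteq> 1}. hook lam c) = (\<Prod>c\<in>T2 j \<union> E. hook lam c)"
      using T_not1[OF j g] by simp
    also have "\<dots> = (\<Prod>c\<in>T2 j. hook lam c) * (\<Prod>c\<in>E. hook lam c)"
      by (rule prod.union_disjoint[OF fT fE T2_disj[OF j g]])
    also have "\<dots> = fact j * (\<Prod>c\<in>E. hook lam c)" using prodT2[OF j] by simp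
    finally show "(\<Prod>c\<in>{c \<in> T j \<union> E. fst c \<noteq> 1}. hook lam c) = fact j * (\<Prod>c\<in>E. hook lam c)" .
  qed simp
  also have "\<dots> = fact j * (\<Sum>E\<in>Elow. \<Prod>c\<in>E. hook lam c)" by (simp add: sum_distrib_left)
  finally show ?thesis .
qed

lemma final:
  "\<forall>j k. j \<le> s - i + 1 \<and> k \<le> s - i + 1 \<longrightarrow>
           real (NN_coeff lam mu j) / fact j = real (NN_coeff lam mu k) / fact k"
proof (intro allI impI)
  fix j k assume jk: "j \<le> s - i + 1 \<and> k \<le> s - i + 1"
  define K where "K = (\<Sum>E\<in>Elow. \<Prod>c\<in>E. hook lam c)"
  have "\<And>j. j \<le> s - i + 1 \<Longrightarrow> real (NN_coeff lam mu j) / fact j = real K"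
  proof -
    fix j assume "j \<le> s - i + 1"
    then have "NN_coeff lam mu j = fact j * K" using NN_eq K_def by simp
    then have "real (NN_coeff lam mu j) = fact j * real K" by (simp add: of_nat_fact)
    then show "real (NN_coeff lam mu j) / fact j = real K" by simp
  qed
  then show "real (NN_coeff lam mu j) / fact j = real (NN_coeff lam mu k) / fact k" using jk by simp
qed

end

theorem proposition4p3:
  fixes I :: "nat set" and lam mu :: "nat list" and s i :: nat
  assumes "finite I" and "I \<noteq> {}" and "0 \<notin> I"
    and "is_lambda_I I lam"
    and "is_partition mu" and "diagram lam - diagram mu = border_cells lam"
    and "s = lam ! 0 - 1"
    and "1 \<le> i" and "i \<le> s"
    and "conj_part lam (i + 1) = 2" and "conj_part lam (s + 1) = 2"
  shows "\<forall>j k. j \<le> s - i + 1 \<and> k \<le> s - i + 1 \<longrightarrow>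
           real (NN_coeff lam mu j) / fact j = real (NN_coeff lam mu k) / fact k"
proof -
  have part: "is_partition lam" and len2: "2 \<le> length lam" and l01: "lam ! 0 = lam ! 1"
    using assms(4) unfolding is_lambda_I_def by auto
  have "1 \<le> lam ! 0" using part_pos[OF part, of 0] len2 by fastforce
  then have l0: "lam ! 0 = s + 1" using assms(7) by simp
  have l1: "lam ! 1 = s + 1" using l0 l01 by simp
  have low: "b \<le> i" if ab: "(a, b) \<in> diagram lam" "3 \<le> a" for a b
  proof (rule ccontr)
    assume "\<not> b \<le> i"
    then have bi: "i + 1 \<le> b" by simp
    from ab have a: "a \<le> length lam" "b \<le> lam ! (a - 1)" by (auto simp: diag_iff)
    have "lam ! (a - 1) \<le> lam ! 2" using part_mono[OF part, of 2 "a - 1"] a ab(2) by simp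
    then have "(3, i + 1) \<in> diagram lam" using a ab(2) bi by (auto simp: diag_iff)
    moreover have "(1, i + 1) \<in> diagram lam" "(2, i + 1) \<in> diagram lam"
      using l0 l1 len2 assms(9) by (auto simp: diag_iff)
    ultimately have sub: "{1, 2, 3} \<subseteq> {r. (r, i + 1) \<in> diagram lam}" by auto
    have "{r. (r, i + 1) \<in> diagram lam} \<subseteq> {1..length lam}" by (auto simp: diag_iff)
    then have "finite {r. (r, i + 1) \<in> diagram lam}" using finite_subset by blast
    then have "card {1::nat, 2, 3} \<le> card {r. (r, i + 1) \<in> diagram lam}" using sub card_mono by blast
    then have "3 \<le> conj_part lam (i + 1)" unfolding conj_part_def by simp
    then show False using assms(10) by simp
  qed
  interpret NNsetup lam mu s i
    by unfold_locales (use part len2 l0 l1 assms(8,9,5,6) low in auto)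
  show ?thesis by (rule final)
qed

end
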